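(* Let $P=(X,\prec)$ be a finite twin-free interval order with no induced subposet isomorphic to $Z$. Let $\mathcal I=\{I(z)=[L(z),R(z)]:z\in X\}$ be a closed interval representation of $P$ such that (1) no interval strictly contains two other intervals, (2) no interval is strictly contained in two other intervals, (3) whenever $I(u)\subsetneq I(v)$ there are unique $x,y\in X$ with $x$ peeking into $vu$ from the left and $y$ peeking into $vu$ from the right, and moreover all peekers have been retracted, i.e. $\mathcal I$ was obtained from such a representation by, for every proper inclusion $I(u)\subsetneq I(v)$, replacing the interval of its left peeker $x$ by $[L(x),L(v)]$ and the interval of its right peeker $y$ by $[R(v),R(y)]$. For each proper inclusion $I(u)\subsetneq I(v)$, replace $I(u)$ by the open interval $(L(v),R(v))$ (leaving intervals of elements that are not inner intervals of a proper inclusion unchanged). Then the resulting set of intervals is a strict OC interval representation of $P$.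
   Context: Posets are strict (irreflexive) partial orders; twins are points with exactly the same comparabilities; twin-free means no two distinct twins. A closed interval representation assigns a closed real interval $[L(x),R(x)]$ to each $x$ with $x\prec y$ iff $R(x)<L(y)$; $P$ is an interval order if one exists. $I(u)$ is strictly contained in $I(v)$ if $I(u)\subset I(v)$ and they do not have identical endpoints. For $I(u)\subsetneq I(v)$: $x$ peeks into $vu$ if $I(x)$ meets $I(v)$ but not $I(u)$; from the left if moreover $R(x)\le L(u)$; from the right if moreover $R(u)\le L(x)$. An OC interval representation assigns to each $x$ an open or closed real interval $I(x)$ with $x\prec y$ iff every point of $I(x)$ is less than every point of $I(y)$; it is strict if no interval is strictly contained in another. $Z$ is the poset on $a,b,c,d,x,y$ with $a\prec b\prec c\prec d$, $x\prec d$, $a\prec y$ (and transitive consequences), all other pairs incomparable. *)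

theory Defs
  imports Main "HOL-Analysis.Analysis"
begin

definition strict_poset :: "'a set \<Rightarrow> ('a \<Rightarrow> 'a \<Rightarrow> bool) \<Rightarrow> bool" where
  "strict_poset X prec \<longleftrightarrow>
     (\<forall>x\<in>X. \<not> prec x x) \<and>
     (\<forall>x\<in>X. \<forall>y\<in>X. \<forall>z\<in>X. prec x y \<longrightarrow> prec y z \<longrightarrow> prec x z)"

definition twins :: "'a set \<Rightarrow> ('a \<Rightarrow> 'a \<Rightarrow> bool) \<Rightarrow> 'a \<Rightarrow> 'a \<Rightarrow> bool" where
  "twins X prec x y \<longleftrightarrow> (\<forall>z\<in>X. (prec z x \<longleftrightarrow> prec z y) \<and> (prec x z \<longleftrightarrow> prec y z))"

definition twin_free :: "'a set \<Rightarrow> ('a \<Rightarrow> 'a \<Rightarrow> bool) \<Rightarrow> bool" where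
  "twin_free X prec \<longleftrightarrow> (\<forall>x\<in>X. \<forall>y\<in>X. x \<noteq> y \<longrightarrow> \<not> twins X prec x y)"

text \<open>The poset Z on a,b,c,d,x,y, encoded as 0,1,2,3,4,5:
  a<b<c<d, x<d, a<y, plus transitive consequences.\<close>
definition Z_less :: "nat \<Rightarrow> nat \<Rightarrow> bool" where
  "Z_less i j \<longleftrightarrow> (i, j) \<in> {(0,1),(0,2),(0,3),(1,2),(1,3),(2,3),(4,3),(0,5)}"

definition has_induced_Z :: "'a set \<Rightarrow> ('a \<Rightarrow> 'a \<Rightarrow> bool) \<Rightarrow> bool" where
  "has_induced_Z X prec \<longleftrightarrow>
     (\<exists>f. inj_on f {0..<6} \<and> f ` {0..<6} \<subseteq> X \<and>
          (\<forall>i\<in>{0..<6}. \<forall>j\<in>{0..<6}. prec (f i) (f j) \<longleftrightarrow> Z_less i j))"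

definition closed_interval_rep ::
  "'a set \<Rightarrow> ('a \<Rightarrow> 'a \<Rightarrow> bool) \<Rightarrow> ('a \<Rightarrow> real) \<Rightarrow> ('a \<Rightarrow> real) \<Rightarrow> bool" where
  "closed_interval_rep X prec L R \<longleftrightarrow>
     (\<forall>x\<in>X. L x \<le> R x) \<and> (\<forall>x\<in>X. \<forall>y\<in>X. prec x y \<longleftrightarrow> R x < L y)"

definition interval_order :: "'a set \<Rightarrow> ('a \<Rightarrow> 'a \<Rightarrow> bool) \<Rightarrow> bool" where
  "interval_order X prec \<longleftrightarrow> (\<exists>L R. closed_interval_rep X prec L R)"

definition strictly_contained :: "('a \<Rightarrow> real) \<Rightarrow> ('a \<Rightarrow> real) \<Rightarrow> 'a \<Rightarrow> 'a \<Rightarrow> bool" where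
  "strictly_contained L R u v \<longleftrightarrow>
     {L u..R u} \<subseteq> {L v..R v} \<and> (L u, R u) \<noteq> (L v, R v)"

definition meets :: "('a \<Rightarrow> real) \<Rightarrow> ('a \<Rightarrow> real) \<Rightarrow> 'a \<Rightarrow> 'a \<Rightarrow> bool" where
  "meets L R x v \<longleftrightarrow> {L x..R x} \<inter> {L v..R v} \<noteq> {}"

definition peeks :: "('a \<Rightarrow> real) \<Rightarrow> ('a \<Rightarrow> real) \<Rightarrow> 'a \<Rightarrow> 'a \<Rightarrow> 'a \<Rightarrow> bool" where
  "peeks L R x v u \<longleftrightarrow> strictly_contained L R u v \<and> meets L R x v \<and> \<not> meets L R x u"

definition peeks_left :: "('a \<Rightarrow> real) \<Rightarrow> ('a \<Rightarrow> real) \<Rightarrow> 'a \<Rightarrow> 'a \<Rightarrow> 'a \<Rightarrow> bool" where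
  "peeks_left L R x v u \<longleftrightarrow> peeks L R x v u \<and> R x \<le> L u"

definition peeks_right :: "('a \<Rightarrow> real) \<Rightarrow> ('a \<Rightarrow> real) \<Rightarrow> 'a \<Rightarrow> 'a \<Rightarrow> 'a \<Rightarrow> bool" where
  "peeks_right L R x v u \<longleftrightarrow> peeks L R x v u \<and> R u \<le> L x"

definition cond1 :: "'a set \<Rightarrow> ('a \<Rightarrow> real) \<Rightarrow> ('a \<Rightarrow> real) \<Rightarrow> bool" where
  "cond1 X L R \<longleftrightarrow> \<not> (\<exists>v\<in>X. \<exists>u1\<in>X. \<exists>u2\<in>X. u1 \<noteq> u2 \<and>
      strictly_contained L R u1 v \<and> strictly_contained L R u2 v)"

definition cond2 :: "'a set \<Rightarrow> ('a \<Rightarrow> real) \<Rightarrow> ('a \<Rightarrow> real) \<Rightarrow> bool" where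
  "cond2 X L R \<longleftrightarrow> \<not> (\<exists>u\<in>X. \<exists>v1\<in>X. \<exists>v2\<in>X. v1 \<noteq> v2 \<and>
      strictly_contained L R u v1 \<and> strictly_contained L R u v2)"

definition cond3 :: "'a set \<Rightarrow> ('a \<Rightarrow> real) \<Rightarrow> ('a \<Rightarrow> real) \<Rightarrow> bool" where
  "cond3 X L R \<longleftrightarrow> (\<forall>u\<in>X. \<forall>v\<in>X. strictly_contained L R u v \<longrightarrow>
      (\<exists>!x. x \<in> X \<and> peeks_left L R x v u) \<and> (\<exists>!y. y \<in> X \<and> peeks_right L R y v u))"

definition retracted ::
  "'a set \<Rightarrow> ('a \<Rightarrow> real) \<Rightarrow> ('a \<Rightarrow> real) \<Rightarrow> ('a \<Rightarrow> real) \<Rightarrow> ('a \<Rightarrow> real) \<Rightarrow> bool" where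
  "retracted X L0 R0 L R \<longleftrightarrow> (\<forall>z\<in>X.
     (\<forall>u\<in>X. \<forall>v\<in>X. peeks_left L0 R0 z v u \<longrightarrow> R z = L0 v) \<and>
     ((\<not> (\<exists>u\<in>X. \<exists>v\<in>X. peeks_left L0 R0 z v u)) \<longrightarrow> R z = R0 z) \<and>
     (\<forall>u\<in>X. \<forall>v\<in>X. peeks_right L0 R0 z v u \<longrightarrow> L z = R0 v) \<and>
     ((\<not> (\<exists>u\<in>X. \<exists>v\<in>X. peeks_right L0 R0 z v u)) \<longrightarrow> L z = L0 z))"

definition oc_set :: "real \<Rightarrow> real \<Rightarrow> bool \<Rightarrow> real set" where
  "oc_set a b op = (if op then {a<..<b} else {a..b})"

definition oc_interval_rep ::
  "'a set \<Rightarrow> ('a \<Rightarrow> 'a \<Rightarrow> bool) \<Rightarrow> ('a \<Rightarrow> real) \<Rightarrow> ('a \<Rightarrow> real) \<Rightarrow> ('a \<Rightarrow> bool) \<Rightarrow> bool" where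
  "oc_interval_rep X prec lo hi op \<longleftrightarrow>
     (\<forall>x\<in>X. oc_set (lo x) (hi x) (op x) \<noteq> {}) \<and>
     (\<forall>x\<in>X. \<forall>y\<in>X. prec x y \<longleftrightarrow>
        (\<forall>p\<in>oc_set (lo x) (hi x) (op x). \<forall>q\<in>oc_set (lo y) (hi y) (op y). p < q))"

definition strict_oc_interval_rep ::
  "'a set \<Rightarrow> ('a \<Rightarrow> 'a \<Rightarrow> bool) \<Rightarrow> ('a \<Rightarrow> real) \<Rightarrow> ('a \<Rightarrow> real) \<Rightarrow> ('a \<Rightarrow> bool) \<Rightarrow> bool" where
  "strict_oc_interval_rep X prec lo hi op \<longleftrightarrow>
     oc_interval_rep X prec lo hi op \<and>
     (\<forall>u\<in>X. \<forall>v\<in>X. \<not> (oc_set (lo u) (hi u) (op u) \<subseteq> oc_set (lo v) (hi v) (op v) \<and>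
                        (lo u, hi u) \<noteq> (lo v, hi v)))"

definition is_inner :: "'a set \<Rightarrow> ('a \<Rightarrow> real) \<Rightarrow> ('a \<Rightarrow> real) \<Rightarrow> 'a \<Rightarrow> bool" where
  "is_inner X L R u \<longleftrightarrow> (\<exists>v\<in>X. strictly_contained L R u v)"

definition outer :: "'a set \<Rightarrow> ('a \<Rightarrow> real) \<Rightarrow> ('a \<Rightarrow> real) \<Rightarrow> 'a \<Rightarrow> 'a" where
  "outer X L R u = (SOME v. v \<in> X \<and> strictly_contained L R u v)"

definition new_lo :: "'a set \<Rightarrow> ('a \<Rightarrow> real) \<Rightarrow> ('a \<Rightarrow> real) \<Rightarrow> 'a \<Rightarrow> real" where
  "new_lo X L R u = (if is_inner X L R u then L (outer X L R u) else L u)"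

definition new_hi :: "'a set \<Rightarrow> ('a \<Rightarrow> real) \<Rightarrow> ('a \<Rightarrow> real) \<Rightarrow> 'a \<Rightarrow> real" where
  "new_hi X L R u = (if is_inner X L R u then R (outer X L R u) else R u)"

definition new_open :: "'a set \<Rightarrow> ('a \<Rightarrow> real) \<Rightarrow> ('a \<Rightarrow> real) \<Rightarrow> 'a \<Rightarrow> bool" where
  "new_open X L R u = is_inner X L R u"

end

theory Submission
  imports Defs
begin

lemma meets_iff:
  "L x \<le> R x \<Longrightarrow> L v \<le> R v \<Longrightarrow> meets L R x v \<longleftrightarrow> (L x \<le> R v \<and> L v \<le> R x)"
  unfolding meets_def
proof
  assume "{L x..R x} \<inter> {L v..R v} \<noteq> {}"
  then obtain p where "p \<in> {L x..R x}" "p \<in> {L v..R v}" by blast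
  then show "L x \<le> R v \<and> L v \<le> R x" by auto
next
  assume "L x \<le> R x" "L v \<le> R v" "L x \<le> R v \<and> L v \<le> R x"
  then have "max (L x) (L v) \<in> {L x..R x} \<inter> {L v..R v}" by auto
  then show "{L x..R x} \<inter> {L v..R v} \<noteq> {}" by blast
qed

lemma sc_iff:
  "L u \<le> R u \<Longrightarrow> strictly_contained L R u v \<longleftrightarrow>
     (L v \<le> L u \<and> R u \<le> R v \<and> (L u \<noteq> L v \<or> R u \<noteq> R v))"
  unfolding strictly_contained_def
proof
  assume a: "L u \<le> R u" "{L u..R u} \<subseteq> {L v..R v} \<and> (L u, R u) \<noteq> (L v, R v)"
  then have "L u \<in> {L v..R v}" "R u \<in> {L v..R v}" by auto
  then show "L v \<le> L u \<and> R u \<le> R v \<and> (L u \<noteq> L v \<or> R u \<noteq> R v)" using a by auto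
next
  assume "L v \<le> L u \<and> R u \<le> R v \<and> (L u \<noteq> L v \<or> R u \<noteq> R v)"
  then show "{L u..R u} \<subseteq> {L v..R v} \<and> (L u, R u) \<noteq> (L v, R v)" by auto
qed

lemma crepD:
  assumes "closed_interval_rep X prec L R"
  shows "\<forall>z\<in>X. L z \<le> R z" "\<forall>p\<in>X. \<forall>q\<in>X. prec p q \<longleftrightarrow> R p < L q"
  using assms by (auto simp: closed_interval_rep_def)

lemma sc_bounds:
  assumes crep: "closed_interval_rep X prec L R" and c3: "cond3 X L R"
    and X: "u \<in> X" "v \<in> X" and sc: "strictly_contained L R u v"
  shows "L v < L u \<and> R u < R v"
proof -
  note LR = crepD(1)[OF crep]
  from c3 X sc obtain x where x: "x \<in> X" "peeks_left L R x v u" unfolding cond3_def by blast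
  from c3 X sc obtain y where y: "y \<in> X" "peeks_right L R y v u" unfolding cond3_def by blast
  have i: "L x \<le> R x" "L u \<le> R u" "L v \<le> R v" "L y \<le> R y" using LR X x y by auto
  have "L v \<le> R x" "R x < L u" using x X i
    by (auto simp: peeks_left_def peeks_def meets_iff)
  moreover have "L y \<le> R v" "R u < L y" using y X i
    by (auto simp: peeks_right_def peeks_def meets_iff)
  ultimately show ?thesis by linarith
qed

lemma lemA:
  assumes crep0: "closed_interval_rep X prec L0 R0" and crep: "closed_interval_rep X prec L R"
    and c3: "cond3 X L R" and ret: "retracted X L0 R0 L R"
    and X: "u \<in> X" "v \<in> X" "y \<in> X" and sc: "strictly_contained L R u v"
    and h: "R u < L y" "L y < R v"
  shows False
proof -
  note LR = crepD(1)[OF crep] and P = crepD(2)[OF crep]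
  note LR0 = crepD(1)[OF crep0] and P0 = crepD(2)[OF crep0]
  from c3 X sc obtain x where x: "x \<in> X" "peeks_left L R x v u" unfolding cond3_def by blast
  have i: "L x \<le> R x" "L u \<le> R u" "L v \<le> R v" using LR X x by auto
  have xf: "L v \<le> R x" "R x < L u" "L x \<le> R v" using x X i
    by (auto simp: peeks_left_def peeks_def meets_iff)
  have "prec x u" using P x X xf by auto
  hence a1: "R0 x < L0 u" using P0 x X by auto
  have "\<not> prec x v" using P x X xf by auto
  hence a2: "L0 v \<le> R0 x" using P0 x X by auto
  have "prec u y" using P X h by auto
  hence a3: "R0 u < L0 y" using P0 X by auto
  have "\<not> prec v y" using P X h by auto
  hence a4: "L0 y \<le> R0 v" using P0 X by auto
  have "peeks_right L0 R0 y v u"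
    unfolding peeks_right_def peeks_def
    using a1 a2 a3 a4 LR0[rule_format, OF X(1)] LR0[rule_format, OF X(2)] LR0[rule_format, OF X(3)] LR0[rule_format, OF x(1)] by (auto simp: sc_iff meets_iff)
  hence Ly: "L y = R0 v" using ret X unfolding retracted_def by blast
  have "R v \<le> R0 v"
  proof (cases "\<exists>u'\<in>X. \<exists>v'\<in>X. peeks_left L0 R0 v v' u'")
    case True
    then obtain u' v' where uv: "u' \<in> X" "v' \<in> X" "peeks_left L0 R0 v v' u'" by blast
    hence "R v = L0 v'" using ret X unfolding retracted_def by blast
    moreover have "L0 v' \<le> R0 v" using uv LR0 X by (auto simp: peeks_left_def peeks_def meets_iff)
    ultimately show ?thesis by simp
  next
    case False
    hence "R v = R0 v" using ret X unfolding retracted_def by blast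
    thus ?thesis by simp
  qed
  thus False using Ly h by linarith
qed

lemma lemB:
  assumes crep0: "closed_interval_rep X prec L0 R0" and crep: "closed_interval_rep X prec L R"
    and c3: "cond3 X L R" and ret: "retracted X L0 R0 L R"
    and X: "u \<in> X" "v \<in> X" "x \<in> X" and sc: "strictly_contained L R u v"
    and h: "R x < L u" "L v < R x"
  shows False
proof -
  note LR = crepD(1)[OF crep] and P = crepD(2)[OF crep]
  note LR0 = crepD(1)[OF crep0] and P0 = crepD(2)[OF crep0]
  from c3 X sc obtain y where y: "y \<in> X" "peeks_right L R y v u" unfolding cond3_def by blast
  have i: "L y \<le> R y" "L u \<le> R u" "L v \<le> R v" using LR X y by auto
  have yf: "L y \<le> R v" "R u < L y" "L v \<le> R y" using y X i
    by (auto simp: peeks_right_def peeks_def meets_iff)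
  have scb: "L v \<le> L u" "R u \<le> R v" using sc X LR by (auto simp: sc_iff)
  have "prec u y" using P y X yf by auto
  hence a1: "R0 u < L0 y" using P0 y X by auto
  have "\<not> prec v y" using P y X yf by auto
  hence a2: "L0 y \<le> R0 v" using P0 y X by auto
  have "prec x u" using P X h by auto
  hence a3: "R0 x < L0 u" using P0 X by auto
  have "\<not> prec x v" using P X h by auto
  hence a4: "L0 v \<le> R0 x" using P0 X by auto
  have "\<not> prec v x" using P X h scb LR by force
  hence a5: "L0 x \<le> R0 v" using P0 X by auto
  have "peeks_left L0 R0 x v u"
    unfolding peeks_left_def peeks_def
    using a1 a2 a3 a4 a5 LR0[rule_format, OF X(1)] LR0[rule_format, OF X(2)] LR0[rule_format, OF X(3)] LR0[rule_format, OF y(1)] by (auto simp: sc_iff meets_iff)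
  hence Rx: "R x = L0 v" using ret X unfolding retracted_def by blast
  have "L0 v \<le> L v"
  proof (cases "\<exists>u'\<in>X. \<exists>v'\<in>X. peeks_right L0 R0 v v' u'")
    case True
    then obtain u' v' where uv: "u' \<in> X" "v' \<in> X" "peeks_right L0 R0 v v' u'" by blast
    hence "L v = R0 v'" using ret X unfolding retracted_def by blast
    moreover have "L0 v \<le> R0 v'" using uv LR0 X by (auto simp: peeks_right_def peeks_def meets_iff)
    ultimately show ?thesis by simp
  next
    case False
    hence "L v = L0 v" using ret X unfolding retracted_def by blast
    thus ?thesis by simp
  qed
  thus False using Rx h by linarith
qed

lemma oc_less:
  assumes "if o1 then a < b else a \<le> b" "if o2 then c < d else (c::real) \<le> d"
  shows "(\<forall>p\<in>oc_set a b o1. \<forall>q\<in>oc_set c d o2. p < q) \<longleftrightarrow> (if o1 \<or> o2 then b \<le> c else b < c)"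
proof (cases o1; cases o2)
  assume o: o1 o2
  have "b \<le> c" if H: "\<forall>p\<in>{a<..<b}. \<forall>q\<in>{c<..<d}. p < q"
  proof (rule ccontr)
    assume "\<not> b \<le> c"
    hence "max ((a+b)/2) ((c+b)/2) \<in> {a<..<b}" "min ((c+d)/2) ((c+b)/2) \<in> {c<..<d}"
      using assms o by (auto simp: max_def min_def)
    hence "max ((a+b)/2) ((c+b)/2) < min ((c+d)/2) ((c+b)/2)" using H by blast
    thus False by (auto simp: max_def min_def split: if_splits)
  qed
  thus ?thesis using o assms by (auto simp: oc_set_def)
next
  assume o: o1 "\<not> o2"
  have "b \<le> c" if H: "\<forall>p\<in>{a<..<b}. \<forall>q\<in>{c..d}. p < q"
  proof (rule ccontr)
    assume "\<not> b \<le> c"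
    hence "max ((a+b)/2) ((c+b)/2) \<in> {a<..<b}" "c \<in> {c..d}"
      using assms o by (auto simp: max_def min_def)
    hence "max ((a+b)/2) ((c+b)/2) < c" using H by blast
    thus False using \<open>\<not> b \<le> c\<close> by (auto simp: max_def min_def split: if_splits)
  qed
  thus ?thesis using o assms by (auto simp: oc_set_def)
next
  assume o: "\<not> o1" o2
  have "b \<le> c" if H: "\<forall>p\<in>{a..b}. \<forall>q\<in>{c<..<d}. p < q"
  proof (rule ccontr)
    assume "\<not> b \<le> c"
    hence "b \<in> {a..b}" "min ((c+d)/2) ((c+b)/2) \<in> {c<..<d}"
      using assms o by (auto simp: max_def min_def)
    hence "b < min ((c+d)/2) ((c+b)/2)" using H by blast
    thus False using \<open>\<not> b \<le> c\<close> by (auto simp: max_def min_def split: if_splits)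
  qed
  thus ?thesis using o assms by (auto simp: oc_set_def)
next
  assume o: "\<not> o1" "\<not> o2"
  thus ?thesis using assms by (auto simp: oc_set_def)
qed

lemma outer_prop:
  "is_inner X L R u \<Longrightarrow> outer X L R u \<in> X \<and> strictly_contained L R u (outer X L R u)"
  unfolding is_inner_def outer_def by (rule someI_ex) blast

lemma Zcase:
  assumes crep: "closed_interval_rep X prec L R" and c3: "cond3 X L R"
    and noZ: "\<not> has_induced_Z X prec"
    and X: "x \<in> X" "v \<in> X" "y \<in> X" "w \<in> X"
    and s1: "strictly_contained L R x v" and s2: "strictly_contained L R y w"
    and h: "R x = L w" "R v = L y" "L w < R v"
  shows False
proof -
  note LR = crepD(1)[OF crep] and P = crepD(2)[OF crep]
  from c3 X s1 obtain a where a: "a \<in> X" "peeks_left L R a v x" unfolding cond3_def by blast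
  from c3 X s2 obtain z where z: "z \<in> X" "peeks_right L R z w y" unfolding cond3_def by blast
  have i: "L x \<le> R x" "L v \<le> R v" "L y \<le> R y" "L w \<le> R w" "L a \<le> R a" "L z \<le> R z"
    using LR X a z by auto
  have b1: "L v < L x" "R x < R v" using sc_bounds[OF crep c3 X(1,2) s1] by auto
  have b2: "L w < L y" "R y < R w" using sc_bounds[OF crep c3 X(3,4) s2] by auto
  have af: "L v \<le> R a" "L a \<le> R v" "R a < L x" using a i
    by (auto simp: peeks_left_def peeks_def meets_iff)
  have zf: "L z \<le> R w" "L w \<le> R z" "R y < L z" using z i
    by (auto simp: peeks_right_def peeks_def meets_iff)
  let ?xs = "[a, x, y, z, v, w]"
  have d: "distinct ?xs" using i b1 b2 af zf h by auto
  have "inj_on (nth ?xs) {0..<6}" by (rule inj_on_nth[OF d]) auto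
  moreover have "nth ?xs ` {0..<6} \<subseteq> X"
  proof
    fix t assume "t \<in> nth ?xs ` {0..<6}"
    then obtain i where "i < 6" "t = ?xs ! i" by auto
    then show "t \<in> X" using X a z by (auto simp: less_Suc_eq numeral_eq_Suc)
  qed
  moreover have "\<forall>i\<in>{0..<6}. \<forall>j\<in>{0..<6}. prec (?xs ! i) (?xs ! j) \<longleftrightarrow> Z_less i j"
  proof -
    have e: "{0..<6::nat} = {0,1,2,3,4,5}" by auto
    show ?thesis unfolding e using i b1 b2 af zf h X a(1) z(1)
      by (simp add: P Z_less_def; linarith?)
  qed
  ultimately have "has_induced_Z X prec" unfolding has_induced_Z_def by blast
  with noZ show False by blast
qed

theorem proposition15:
  fixes X :: "'a set" and prec :: "'a \<Rightarrow> 'a \<Rightarrow> bool"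
    and L0 R0 L R :: "'a \<Rightarrow> real"
  assumes "finite X"
    and "strict_poset X prec"
    and "twin_free X prec"
    and "interval_order X prec"
    and "\<not> has_induced_Z X prec"
    and "closed_interval_rep X prec L0 R0"
    and "cond1 X L0 R0" and "cond2 X L0 R0" and "cond3 X L0 R0"
    and "retracted X L0 R0 L R"
    and "closed_interval_rep X prec L R"
    and "cond1 X L R" and "cond2 X L R" and "cond3 X L R"
  shows "strict_oc_interval_rep X prec (new_lo X L R) (new_hi X L R) (new_open X L R)"
proof -
  note crep0 = assms(6) and crep = assms(11) and c3 = assms(14) and ret = assms(10)
  note LR = crepD(1)[OF crep] and P = crepD(2)[OF crep]
  note c2 = assms(13)
  define lo where "lo = new_lo X L R"
  define hi where "hi = new_hi X L R"
  define op where "op = new_open X L R"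
  define I where "I = is_inner X L R"
  define ot where "ot = outer X L R"
  have inn: "ot u \<in> X" "strictly_contained L R u (ot u)" "L (ot u) < L u" "R u < R (ot u)"
    "lo u = L (ot u)" "hi u = R (ot u)" "op u" if "I u" "u \<in> X" for u
  proof -
    show ou: "ot u \<in> X" "strictly_contained L R u (ot u)"
      using outer_prop[of X L R u] that by (auto simp: I_def ot_def)
    show "L (ot u) < L u" "R u < R (ot u)" using sc_bounds[OF crep c3 that(2) ou(1) ou(2)] by auto
    show "lo u = L (ot u)" "hi u = R (ot u)" "op u" using that
      by (auto simp: lo_def hi_def op_def new_lo_def new_hi_def new_open_def I_def ot_def)
  qed
  have notinn: "lo u = L u" "hi u = R u" "\<not> op u" if "\<not> I u" for u
    using that by (auto simp: lo_def hi_def op_def new_lo_def new_hi_def new_open_def I_def)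
  have notsc: "\<not> strictly_contained L R u v" if "\<not> I u" "v \<in> X" for u v
    using that by (auto simp: I_def is_inner_def)
  have ne: "if op z then lo z < hi z else lo z \<le> hi z" if "z \<in> X" for z
  proof (cases "I z")
    case True
    then show ?thesis using inn[OF True that] LR that by force
  next
    case False
    then show ?thesis using notinn[OF False] LR that by auto
  qed
  have nonempty: "oc_set (lo z) (hi z) (op z) \<noteq> {}" if "z \<in> X" for z
    using ne[OF that] by (auto simp: oc_set_def split: if_splits)
  have iff: "prec x y \<longleftrightarrow> (if op x \<or> op y then hi x \<le> lo y else hi x < lo y)"
    if x: "x \<in> X" and y: "y \<in> X" for x y
  proof (cases "I x"; cases "I y")
    assume a: "I x" "I y"
    note ix = inn[OF a(1) x] and iy = inn[OF a(2) y]
    have A1: "\<not> (R x < L y \<and> L y < R (ot x))"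
      using lemA[OF crep0 crep c3 ret x ix(1) y ix(2)] by blast
    have B1: "\<not> (R x < L y \<and> L (ot y) < R x)"
      using lemB[OF crep0 crep c3 ret y iy(1) x iy(2)] by blast
    have A2: "\<not> (R x < L (ot y) \<and> L (ot y) < R (ot x))"
      using lemA[OF crep0 crep c3 ret x ix(1) iy(1) ix(2)] by blast
    have B2: "\<not> (R (ot x) < L y \<and> L (ot y) < R (ot x))"
      using lemB[OF crep0 crep c3 ret y iy(1) ix(1) iy(2)] by blast
    have Z: "\<not> (R x = L (ot y) \<and> R (ot x) = L y \<and> L (ot y) < R (ot x))"
      using Zcase[OF crep c3 assms(5) x ix(1) y iy(1) ix(2) iy(2)] by blast
    show ?thesis using A1 A2 B1 B2 Z ix iy P x y by auto
  next
    assume a: "I x" "\<not> I y"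
    note ix = inn[OF a(1) x] and iy = notinn[OF a(2)]
    have A1: "\<not> (R x < L y \<and> L y < R (ot x))"
      using lemA[OF crep0 crep c3 ret x ix(1) y ix(2)] by blast
    show ?thesis using A1 ix iy P x y by auto
  next
    assume a: "\<not> I x" "I y"
    note ix = notinn[OF a(1)] and iy = inn[OF a(2) y]
    have B1: "\<not> (R x < L y \<and> L (ot y) < R x)"
      using lemB[OF crep0 crep c3 ret y iy(1) x iy(2)] by blast
    show ?thesis using B1 ix iy P x y by auto
  next
    assume a: "\<not> I x" "\<not> I y"
    show ?thesis using notinn[OF a(1)] notinn[OF a(2)] P x y by auto
  qed
  have scI: "I u" if "u \<in> X" "v \<in> X" "strictly_contained L R u v" for u v
    using that by (auto simp: I_def is_inner_def)
  have c2': "p = q" if "u \<in> X" "p \<in> X" "q \<in> X" "strictly_contained L R u p"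
    "strictly_contained L R u q" for u p q
    using c2 that unfolding cond2_def by blast
  have strict: "\<not> (oc_set (lo u) (hi u) (op u) \<subseteq> oc_set (lo v) (hi v) (op v) \<and>
                        (lo u, hi u) \<noteq> (lo v, hi v))" if u: "u \<in> X" and v: "v \<in> X" for u v
  proof
    assume H: "oc_set (lo u) (hi u) (op u) \<subseteq> oc_set (lo v) (hi v) (op v) \<and>
                        (lo u, hi u) \<noteq> (lo v, hi v)"
    show False
    proof (cases "I u"; cases "I v")
      assume a: "I u" "I v"
      note iu = inn[OF a(1) u] and iv = inn[OF a(2) v]
      have "L u \<le> R u" using LR u by auto
      hence "L (ot u) < R (ot u)" using iu by linarith
      have "L (ot v) \<le> L (ot u) \<and> R (ot u) \<le> R (ot v)"
        using H iu iv \<open>L (ot u) < R (ot u)\<close> greaterThanLessThan_subseteq_greaterThanLessThan[of "L (ot u)" "R (ot u)" "L (ot v)" "R (ot v)"]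
        by (auto simp: oc_set_def)
      moreover have "L (ot u) \<noteq> L (ot v) \<or> R (ot u) \<noteq> R (ot v)" using H iu iv by auto
      ultimately have s: "strictly_contained L R (ot u) (ot v)" using LR iu by (auto simp: sc_iff)
      have "strictly_contained L R u (ot v)" using iu LR s u by (auto simp: sc_iff)
      moreover have "ot u \<noteq> ot v" using s by (auto simp: strictly_contained_def)
      ultimately show False using c2'[OF u iu(1) iv(1) iu(2)] by blast
    next
      assume a: "I u" "\<not> I v"
      note iu = inn[OF a(1) u] and iv = notinn[OF a(2)]
      have "L u \<le> R u" using LR u by auto
      hence "L (ot u) < R (ot u)" using iu by linarith
      have "L v \<le> L (ot u) \<and> R (ot u) \<le> R v"
        using H iu iv \<open>L (ot u) < R (ot u)\<close> greaterThanLessThan_subseteq_atLeastAtMost_iff[of "L (ot u)" "R (ot u)" "L v" "R v"]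
        by (auto simp: oc_set_def)
      moreover have "L (ot u) \<noteq> L v \<or> R (ot u) \<noteq> R v" using H iu iv by auto
      ultimately have s: "strictly_contained L R (ot u) v" using LR iu by (auto simp: sc_iff)
      have "strictly_contained L R u v" using iu LR s u by (auto simp: sc_iff)
      moreover have "ot u \<noteq> v" using s by (auto simp: strictly_contained_def)
      ultimately show False using c2'[OF u iu(1) v iu(2)] by blast
    next
      assume a: "\<not> I u" "I v"
      note iu = notinn[OF a(1)] and iv = inn[OF a(2) v]
      have "L u \<in> {L u..R u}" "R u \<in> {L u..R u}" using LR u by auto
      hence "L (ot v) < L u \<and> R u < R (ot v)" using H iu iv by (auto simp: oc_set_def)
      hence "strictly_contained L R u (ot v)" using LR u by (auto simp: sc_iff)
      thus False using notsc[OF a(1) iv(1)] by blast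
    next
      assume a: "\<not> I u" "\<not> I v"
      note iu = notinn[OF a(1)] and iv = notinn[OF a(2)]
      have "L u \<in> {L u..R u}" "R u \<in> {L u..R u}" using LR u by auto
      hence "L v \<le> L u \<and> R u \<le> R v" using H iu iv by (auto simp: oc_set_def)
      moreover have "L u \<noteq> L v \<or> R u \<noteq> R v" using H iu iv by auto
      ultimately have "strictly_contained L R u v" using LR u by (auto simp: sc_iff)
      thus False using notsc[OF a(1) v] by blast
    qed
  qed
  show ?thesis
    unfolding strict_oc_interval_rep_def oc_interval_rep_def lo_def[symmetric] hi_def[symmetric] op_def[symmetric]
  proof (intro conjI ballI)
    fix z assume "z \<in> X" thus "oc_set (lo z) (hi z) (op z) \<noteq> {}" by (rule nonempty)
  next
    fix x y assume x: "x \<in> X" and y: "y \<in> X"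
    show "prec x y = (\<forall>p\<in>oc_set (lo x) (hi x) (op x). \<forall>q\<in>oc_set (lo y) (hi y) (op y). p < q)"
      using iff[OF x y] oc_less[OF ne[OF x] ne[OF y]] by simp
  next
    fix u v assume "u \<in> X" "v \<in> X" thus "\<not> (oc_set (lo u) (hi u) (op u) \<subseteq> oc_set (lo v) (hi v) (op v) \<and>
                        (lo u, hi u) \<noteq> (lo v, hi v))" by (rule strict)
  qed
qed

end
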